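(* Let $X_1,\dots,X_n$ be mild $E\mathcal M$-simplicial sets. Then the natural map $\Phi\colon E\mathrm{Inj}(n\times\omega,\omega)\times_{E\mathcal M^n}X_1\times\dots\times X_n\to X_1\times\dots\times X_n$ has image exactly the unbiased box product $X_1\boxtimes\dots\boxtimes X_n$ and is an isomorphism onto it.
   Context: $\omega=\{1,2,3,\dots\}$, $\mathcal M$ the monoid of injections $\omega\to\omega$; for $A\subset\omega$, $\mathcal M_A$ is the submonoid of injections fixing $A$ elementwise; $A$ is co-infinite if $\omega\setminus A$ is infinite. $E\mathcal M$ is the simplicial monoid with $(E\mathcal M)_n=\mathcal M^{1+n}$, pointwise multiplication, structure maps by precomposition in $\{0,\dots,n\}$. For an $E\mathcal M$-simplicial set $X$, $x\in X_n$ is $k$-supported on $A$ ($0\le k\le n$) if $i_k(u).x=x$ for all $u\in\mathcal M_A$, with $i_k\colon\mathcal M\to\mathcal M^{1+n}$ the inclusion of the $(1+k)$-th factor. $X$ is mild if each simplex $x\in X_n$ is, for each $k$, $k$-supported on some co-infinite set. The unbiased box product $X_1\boxtimes\dots\boxtimes X_n\subset X_1\times\dots\times X_n$ consists in degree $m$ of those $(x_1,\dots,x_n)$ such that for each $0\le k\le m$ there are pairwise disjoint $A_k^{(1)},\dots,A_k^{(n)}\subset\omega$ with $\bigcup_iA_k^{(i)}$ co-infinite and $x_i$ $k$-supported on $A_k^{(i)}$. $E\mathrm{Inj}(n\times\omega,\omega)$ has $m$-simplices the tuples $(f_0,\dots,f_m)$ of injections $n\times\omega\to\omega$. The quotient $E\mathrm{Inj}(n\times\omega,\omega)\times_{E\mathcal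 M^n}X_1\times\dots\times X_n$ of $E\mathrm{Inj}(n\times\omega,\omega)\times X_1\times\dots\times X_n$ is by the equivalence relation generated on $m$-simplices by $(f_0,\dots,f_m;u_1.x_1,\dots,u_n.x_n)\sim(f_0\circ(u_1^{(0)}\amalg\dots\amalg u_n^{(0)}),\dots,f_m\circ(u_1^{(m)}\amalg\dots\amalg u_n^{(m)});x_1,\dots,x_n)$ for $u_i=(u_i^{(0)},\dots,u_i^{(m)})\in(E\mathcal M)_m$; $E\mathcal M$ acts by postcomposition. $\Phi[f_0,\dots,f_m;x_1,\dots,x_n]=((f_0\iota_1,\dots,f_m\iota_1).x_1,\dots,(f_0\iota_n,\dots,f_m\iota_n).x_n)$ with $\iota_j(t)=(j,t)$. *)

theory Defs
  imports Main
begin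

text \<open>omega is modelled by the type nat (an infinite countable set; only its
  bijection class matters).  Injections of omega: inj u.\<close>

text \<open>(EM)_m = M^(1+m): lists of length m+1 of injections.\<close>
definition em_elem :: "nat \<Rightarrow> (nat \<Rightarrow> nat) list \<Rightarrow> bool" where
  "em_elem m u \<longleftrightarrow> length u = Suc m \<and> (\<forall>f\<in>set u. inj f)"

text \<open>Simplicial operators alpha : [k] -> [n] (monotone), as lists
  [alpha 0, ..., alpha k].\<close>
definition simp_op :: "nat \<Rightarrow> nat list \<Rightarrow> bool" where
  "simp_op n \<alpha> \<longleftrightarrow> \<alpha> \<noteq> [] \<and> sorted \<alpha> \<and> (\<forall>i\<in>set \<alpha>. i \<le> n)"

record 'a emsset =
  simp :: "nat \<Rightarrow> 'a set"
  smap :: "nat \<Rightarrow> nat list \<Rightarrow> 'a \<Rightarrow> 'a"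
  sact :: "nat \<Rightarrow> (nat \<Rightarrow> nat) list \<Rightarrow> 'a \<Rightarrow> 'a"

definition em_sset :: "'a emsset \<Rightarrow> bool" where
  "em_sset X \<longleftrightarrow>
     (\<forall>n \<alpha> x. simp_op n \<alpha> \<and> x \<in> simp X n \<longrightarrow> smap X n \<alpha> x \<in> simp X (length \<alpha> - 1)) \<and>
     (\<forall>n x. x \<in> simp X n \<longrightarrow> smap X n [0..<Suc n] x = x) \<and>
     (\<forall>n \<alpha> \<beta> x. simp_op n \<alpha> \<and> simp_op (length \<alpha> - 1) \<beta> \<and> x \<in> simp X n \<longrightarrow>
        smap X (length \<alpha> - 1) \<beta> (smap X n \<alpha> x) = smap X n (map (\<lambda>i. \<alpha> ! i) \<beta>) x) \<and>
     (\<forall>m u x. em_elem m u \<and> x \<in> simp X m \<longrightarrow> sact X m u x \<in> simp X m) \<and>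
     (\<forall>m x. x \<in> simp X m \<longrightarrow> sact X m (replicate (Suc m) id) x = x) \<and>
     (\<forall>m u v x. em_elem m u \<and> em_elem m v \<and> x \<in> simp X m \<longrightarrow>
        sact X m u (sact X m v x) = sact X m (map2 (\<circ>) u v) x) \<and>
     (\<forall>n \<alpha> u x. simp_op n \<alpha> \<and> em_elem n u \<and> x \<in> simp X n \<longrightarrow>
        smap X n \<alpha> (sact X n u x) = sact X (length \<alpha> - 1) (map (\<lambda>i. u ! i) \<alpha>) (smap X n \<alpha> x))"

definition incl_k :: "nat \<Rightarrow> nat \<Rightarrow> (nat \<Rightarrow> nat) \<Rightarrow> (nat \<Rightarrow> nat) list" where
  "incl_k m k u = (replicate (Suc m) id)[k := u]"

definition ksupp :: "'a emsset \<Rightarrow> nat \<Rightarrow> nat \<Rightarrow> nat set \<Rightarrow> 'a \<Rightarrow> bool" where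
  "ksupp X m k A x \<longleftrightarrow> (\<forall>u. inj u \<and> (\<forall>a\<in>A. u a = a) \<longrightarrow> sact X m (incl_k m k u) x = x)"

definition mild :: "'a emsset \<Rightarrow> bool" where
  "mild X \<longleftrightarrow> (\<forall>m x k. x \<in> simp X m \<and> k \<le> m \<longrightarrow> (\<exists>A. infinite (- A) \<and> ksupp X m k A x))"

definition box :: "'a emsset list \<Rightarrow> nat \<Rightarrow> 'a list set" where
  "box Xs m = {xs. length xs = length Xs \<and> (\<forall>i<length Xs. xs ! i \<in> simp (Xs ! i) m) \<and>
     (\<forall>k\<le>m. \<exists>A :: nat \<Rightarrow> nat set.
        (\<forall>i<length Xs. \<forall>j<length Xs. i \<noteq> j \<longrightarrow> A i \<inter> A j = {}) \<and>
        infinite (- (\<Union>i<length Xs. A i)) \<and>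
        (\<forall>i<length Xs. ksupp (Xs ! i) m k (A i) (xs ! i)))}"

text \<open>An injection n x omega -> omega is given as the list of its restrictions
  f o iota_j (j < n), jointly injective.\<close>
definition einj :: "nat \<Rightarrow> (nat \<Rightarrow> nat) list \<Rightarrow> bool" where
  "einj n f \<longleftrightarrow> length f = n \<and> inj_on (\<lambda>(j, t). (f ! j) t) ({..<n} \<times> UNIV)"

text \<open>m-simplices of EInj(n x omega, omega) x X_1 x ... x X_n.\<close>
definition qcar :: "'a emsset list \<Rightarrow> nat \<Rightarrow> ((nat \<Rightarrow> nat) list list \<times> 'a list) set" where
  "qcar Xs m = {(fs, xs). length fs = Suc m \<and> (\<forall>f\<in>set fs. einj (length Xs) f) \<and>
      length xs = length Xs \<and> (\<forall>i<length Xs. xs ! i \<in> simp (Xs ! i) m)}"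

text \<open>Generating relation: (f; u_1.x_1,...,u_n.x_n) ~ (f o (u_1 + ... + u_n); x_1,...,x_n).\<close>
definition qgen :: "'a emsset list \<Rightarrow> nat \<Rightarrow>
    ((nat \<Rightarrow> nat) list list \<times> 'a list) \<Rightarrow> ((nat \<Rightarrow> nat) list list \<times> 'a list) \<Rightarrow> bool" where
  "qgen Xs m p q \<longleftrightarrow> (\<exists>fs xs us. (fs, xs) \<in> qcar Xs m \<and> length us = length Xs \<and>
      (\<forall>u\<in>set us. em_elem m u) \<and>
      p = (fs, map (\<lambda>i. sact (Xs ! i) m (us ! i) (xs ! i)) [0..<length Xs]) \<and>
      q = (map (\<lambda>k. map (\<lambda>j. (fs ! k ! j) \<circ> (us ! j ! k)) [0..<length Xs]) [0..<Suc m], xs))"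

definition qrel :: "'a emsset list \<Rightarrow> nat \<Rightarrow>
    ((nat \<Rightarrow> nat) list list \<times> 'a list) \<Rightarrow> ((nat \<Rightarrow> nat) list list \<times> 'a list) \<Rightarrow> bool" where
  "qrel Xs m = equivclp (qgen Xs m)"

definition Phi :: "'a emsset list \<Rightarrow> nat \<Rightarrow> ((nat \<Rightarrow> nat) list list \<times> 'a list) \<Rightarrow> 'a list" where
  "Phi Xs m p = map (\<lambda>j. sact (Xs ! j) m (map (\<lambda>k. fst p ! k ! j) [0..<Suc m]) (snd p ! j))
      [0..<length Xs]"

definition qsmap :: "'a emsset list \<Rightarrow> nat \<Rightarrow> nat list \<Rightarrow>
    ((nat \<Rightarrow> nat) list list \<times> 'a list) \<Rightarrow> ((nat \<Rightarrow> nat) list list \<times> 'a list)" where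
  "qsmap Xs m \<alpha> p = (map (\<lambda>i. fst p ! i) \<alpha>,
      map (\<lambda>j. smap (Xs ! j) m \<alpha> (snd p ! j)) [0..<length Xs])"

definition qact :: "nat \<Rightarrow> (nat \<Rightarrow> nat) list \<Rightarrow>
    ((nat \<Rightarrow> nat) list list \<times> 'a list) \<Rightarrow> ((nat \<Rightarrow> nat) list list \<times> 'a list)" where
  "qact m v p = (map2 (\<lambda>vk f. map (\<lambda>g. vk \<circ> g) f) v (fst p), snd p)"

end

theory Submission
  imports Defs "HOL-Library.Infinite_Set" "HOL-Library.Nat_Bijection"
begin

declare upt_Suc[simp del]

lemma map_upt_nth: "i < n \<Longrightarrow> map F [0..<n] ! i = F i" by simp

lemma es_closed: "em_sset X \<Longrightarrow> em_elem m u \<Longrightarrow> x \<in> simp X m \<Longrightarrow> sact X m u x \<in> simp X m"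
  unfolding em_sset_def by blast
lemma es_id: "em_sset X \<Longrightarrow> x \<in> simp X m \<Longrightarrow> sact X m (replicate (Suc m) id) x = x"
  unfolding em_sset_def by blast
lemma es_comp: "em_sset X \<Longrightarrow> em_elem m u \<Longrightarrow> em_elem m v \<Longrightarrow> x \<in> simp X m \<Longrightarrow>
    sact X m u (sact X m v x) = sact X m (map2 (\<circ>) u v) x"
  unfolding em_sset_def by blast
lemma es_nat: "em_sset X \<Longrightarrow> simp_op n \<alpha> \<Longrightarrow> em_elem n u \<Longrightarrow> x \<in> simp X n \<Longrightarrow>
    smap X n \<alpha> (sact X n u x) = sact X (length \<alpha> - 1) (map (\<lambda>i. u ! i) \<alpha>) (smap X n \<alpha> x)"
  unfolding em_sset_def by blast

lemma em_elem_map: "em_elem m (map F [0..<Suc m]) \<longleftrightarrow> (\<forall>k\<le>m. inj (F k))"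
  unfolding em_elem_def by (auto simp: less_Suc_eq_le)

lemma em_elem_nth: "em_elem m u \<Longrightarrow> k \<le> m \<Longrightarrow> inj (u ! k)"
  unfolding em_elem_def by (metis le_imp_less_Suc nth_mem)

lemma einj_inj: "einj n f \<Longrightarrow> j < n \<Longrightarrow> inj (f ! j)"
  unfolding einj_def by (rule injI) (use inj_onD[of "\<lambda>(j, t). (f ! j) t" "{..<n} \<times> UNIV" "(j, _)" "(j, _)"] in auto)

lemma einj_D: "einj n f \<Longrightarrow> i < n \<Longrightarrow> j < n \<Longrightarrow> (f ! i) s = (f ! j) t \<Longrightarrow> i = j \<and> s = t"
  unfolding einj_def using inj_onD[of "\<lambda>(j, t). (f ! j) t" "{..<n} \<times> UNIV" "(i, s)" "(j, t)"] by auto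

lemma einj_I: "length f = n \<Longrightarrow> (\<And>i j s t. i < n \<Longrightarrow> j < n \<Longrightarrow> (f ! i) s = (f ! j) t \<Longrightarrow> i = j \<and> s = t)
   \<Longrightarrow> einj n f"
proof -
  assume l: "length f = n" and H: "\<And>i j s t. i < n \<Longrightarrow> j < n \<Longrightarrow> (f ! i) s = (f ! j) t \<Longrightarrow> i = j \<and> s = t"
  have "inj_on (\<lambda>(j, t). (f ! j) t) ({..<n} \<times> UNIV)"
  proof (rule inj_onI)
    fix a b assume a: "a \<in> {..<n} \<times> (UNIV :: nat set)" and b: "b \<in> {..<n} \<times> (UNIV :: nat set)"
      and e: "(\<lambda>(j, t). (f ! j) t) a = (\<lambda>(j, t). (f ! j) t) b"
    obtain i s where as: "a = (i, s)" by fastforce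
    obtain j t where bs: "b = (j, t)" by fastforce
    have "i < n" "j < n" "(f ! i) s = (f ! j) t" using a b e as bs by auto
    from H[OF this] show "a = b" using as bs by simp
  qed
  then show ?thesis using l unfolding einj_def by simp
qed

lemma qcar_iff: "(fs, xs) \<in> qcar Xs m \<longleftrightarrow> length fs = Suc m \<and> (\<forall>k\<le>m. einj (length Xs) (fs ! k)) \<and>
   length xs = length Xs \<and> (\<forall>i<length Xs. xs ! i \<in> simp (Xs ! i) m)"
  unfolding qcar_def by (auto simp: all_set_conv_all_nth less_Suc_eq_le)

lemma einj_len: "einj n f \<Longrightarrow> length f = n" unfolding einj_def by simp

lemma Phi_nth: "j < length Xs \<Longrightarrow> Phi Xs m (fs, xs) ! j = sact (Xs ! j) m (map (\<lambda>k. fs ! k ! j) [0..<Suc m]) (xs ! j)"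
  unfolding Phi_def by simp

lemma Phi_len[simp]: "length (Phi Xs m p) = length Xs" unfolding Phi_def by simp

lemma qgen_Phi:
  assumes ES: "\<forall>X\<in>set Xs. em_sset X" and g: "qgen Xs m p q"
  shows "Phi Xs m p = Phi Xs m q"
proof -
  obtain fs xs us where c: "(fs, xs) \<in> qcar Xs m" and lu: "length us = length Xs" and
    ue: "\<forall>u\<in>set us. em_elem m u" and
    p: "p = (fs, map (\<lambda>i. sact (Xs ! i) m (us ! i) (xs ! i)) [0..<length Xs])" and
    q: "q = (map (\<lambda>k. map (\<lambda>j. (fs ! k ! j) \<circ> (us ! j ! k)) [0..<length Xs]) [0..<Suc m], xs)"
    using g unfolding qgen_def by blast
  note cc = c[unfolded qcar_iff]
  show ?thesis
  proof (rule nth_equalityI)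
    fix j assume j: "j < length (Phi Xs m p)"
    then have j': "j < length Xs" by simp
    have X: "em_sset (Xs ! j)" using ES j' by simp
    have uj: "em_elem m (us ! j)" using ue lu j' by simp
    have fj: "em_elem m (map (\<lambda>k. fs ! k ! j) [0..<Suc m])"
      unfolding em_elem_map using cc j' einj_inj by blast
    have lus: "length (us ! j) = Suc m" using uj em_elem_def by blast
    have "Phi Xs m p ! j = sact (Xs ! j) m (map (\<lambda>k. fs ! k ! j) [0..<Suc m]) (sact (Xs ! j) m (us ! j) (xs ! j))"
      using j' by (simp add: p Phi_nth)
    also have "\<dots> = sact (Xs ! j) m (map2 (\<circ>) (map (\<lambda>k. fs ! k ! j) [0..<Suc m]) (us ! j)) (xs ! j)"
      using es_comp[OF X fj uj] cc j' by simp
    also have "map2 (\<circ>) (map (\<lambda>k. fs ! k ! j) [0..<Suc m]) (us ! j) = map (\<lambda>k. fst q ! k ! j) [0..<Suc m]"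
      using lus cc j' by (intro nth_equalityI) (auto simp: q einj_len)
    also have "sact (Xs ! j) m (map (\<lambda>k. fst q ! k ! j) [0..<Suc m]) (xs ! j) = Phi Xs m q ! j"
      using j' by (simp add: q Phi_def)
    finally show "Phi Xs m p ! j = Phi Xs m q ! j" .
  qed simp
qed

lemma qrel_Phi:
  assumes ES: "\<forall>X\<in>set Xs. em_sset X" and r: "qrel Xs m p q"
  shows "Phi Xs m p = Phi Xs m q"
  using r unfolding qrel_def
proof (induction rule: equivclp_induct)
  case base then show ?case by simp
next
  case (step y z) then show ?case using qgen_Phi[OF ES] by (metis symclp_def)
qed


lemma Phi_smap:
  assumes ES: "\<forall>X\<in>set Xs. em_sset X" and a: "simp_op m \<alpha>" and p: "p \<in> qcar Xs m"
  shows "Phi Xs (length \<alpha> - 1) (qsmap Xs m \<alpha> p) = map (\<lambda>j. smap (Xs ! j) m \<alpha> (Phi Xs m p ! j)) [0..<length Xs]"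
proof -
  obtain fs xs where pe: "p = (fs, xs)" by fastforce
  note cc = p[unfolded pe qcar_iff]
  have ane: "\<alpha> \<noteq> []" and am: "\<forall>i\<in>set \<alpha>. i \<le> m" using a unfolding simp_op_def by auto
  show ?thesis
  proof (rule nth_equalityI)
    fix j assume "j < length (Phi Xs (length \<alpha> - 1) (qsmap Xs m \<alpha> p))"
    then have j: "j < length Xs" by simp
    have X: "em_sset (Xs ! j)" using ES j by simp
    define u where "u = map (\<lambda>k. fs ! k ! j) [0..<Suc m]"
    have ue: "em_elem m u" unfolding u_def em_elem_map using cc j einj_inj by blast
    have L: "Phi Xs (length \<alpha> - 1) (qsmap Xs m \<alpha> p) ! j =
      sact (Xs ! j) (length \<alpha> - 1) (map (\<lambda>k. map (\<lambda>i. fs ! i) \<alpha> ! k ! j) [0..<Suc (length \<alpha> - 1)])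
         (smap (Xs ! j) m \<alpha> (xs ! j))"
      using j by (simp add: Phi_def qsmap_def pe)
    have R: "map (\<lambda>j. smap (Xs ! j) m \<alpha> (Phi Xs m p ! j)) [0..<length Xs] ! j =
       sact (Xs ! j) (length \<alpha> - 1) (map (\<lambda>i. u ! i) \<alpha>) (smap (Xs ! j) m \<alpha> (xs ! j))"
      using j es_nat[OF X a ue] cc by (simp add: pe Phi_nth u_def)
    have e1: "map (\<lambda>k. map (\<lambda>i. fs ! i) \<alpha> ! k ! j) [0..<Suc (length \<alpha> - 1)] = map (\<lambda>i. fs ! i ! j) \<alpha>"
      using ane by (intro nth_equalityI) auto
    have e2: "map (\<lambda>i. u ! i) \<alpha> = map (\<lambda>i. fs ! i ! j) \<alpha>"
      using am by (auto simp: u_def less_Suc_eq_le)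
    show "Phi Xs (length \<alpha> - 1) (qsmap Xs m \<alpha> p) ! j = map (\<lambda>j. smap (Xs ! j) m \<alpha> (Phi Xs m p ! j)) [0..<length Xs] ! j"
      using L R e1 e2 by simp
  qed simp
qed

lemma Phi_qact:
  assumes ES: "\<forall>X\<in>set Xs. em_sset X" and v: "em_elem m v" and p: "p \<in> qcar Xs m"
  shows "Phi Xs m (qact m v p) = map (\<lambda>j. sact (Xs ! j) m v (Phi Xs m p ! j)) [0..<length Xs]"
proof -
  obtain fs xs where pe: "p = (fs, xs)" by fastforce
  note cc = p[unfolded pe qcar_iff]
  have lv: "length v = Suc m" using v em_elem_def by blast
  show ?thesis
  proof (rule nth_equalityI)
    fix j assume "j < length (Phi Xs m (qact m v p))"
    then have j: "j < length Xs" by simp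
    have X: "em_sset (Xs ! j)" using ES j by simp
    define u where "u = map (\<lambda>k. fs ! k ! j) [0..<Suc m]"
    have ue: "em_elem m u" unfolding u_def em_elem_map using cc j einj_inj by blast
    have E: "k < Suc m \<Longrightarrow> map2 (\<lambda>vk f. map (\<lambda>g. vk \<circ> g) f) v fs ! k ! j = v ! k \<circ> fs ! k ! j" for k
    proof -
      assume k: "k < Suc m"
      have "length (fs ! k) = length Xs" using cc k einj_len by (simp add: less_Suc_eq_le)
      then show ?thesis using cc lv j k by simp
    qed
    have L: "Phi Xs m (qact m v p) ! j = sact (Xs ! j) m (map (\<lambda>k. v ! k \<circ> fs ! k ! j) [0..<Suc m]) (xs ! j)"
    proof -
      have M: "map (\<lambda>k. fst (qact m v p) ! k ! j) [0..<Suc m] = map (\<lambda>k. v ! k \<circ> fs ! k ! j) [0..<Suc m]"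
      proof (rule map_cong[OF refl])
        fix k assume "k \<in> set [0..<Suc m]"
        then have k: "k < Suc m" by simp
        have "length (fs ! k) = length Xs" using cc k einj_len by (simp add: less_Suc_eq_le)
        then show "fst (qact m v p) ! k ! j = v ! k \<circ> fs ! k ! j" using cc lv j k by (simp add: qact_def pe)
      qed
      have S: "snd (qact m v p) = xs" by (simp add: qact_def pe)
      have "Phi Xs m (qact m v p) ! j = sact (Xs ! j) m (map (\<lambda>k. fst (qact m v p) ! k ! j) [0..<Suc m]) (snd (qact m v p) ! j)"
        using j by (simp add: Phi_def)
      then show ?thesis unfolding M S .
    qed

    have R: "map (\<lambda>j. sact (Xs ! j) m v (Phi Xs m p ! j)) [0..<length Xs] ! j = sact (Xs ! j) m (map2 (\<circ>) v u) (xs ! j)"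
      using j es_comp[OF X v ue] cc by (simp add: pe Phi_nth u_def)
    have "map2 (\<circ>) v u = map (\<lambda>k. v ! k \<circ> fs ! k ! j) [0..<Suc m]"
      using lv by (intro nth_equalityI) (auto simp: u_def)
    then show "Phi Xs m (qact m v p) ! j = map (\<lambda>j. sact (Xs ! j) m v (Phi Xs m p ! j)) [0..<length Xs] ! j"
      using L R by simp
  qed simp
qed

lemma incl_k_em: "inj u \<Longrightarrow> em_elem m (incl_k m k u)"
proof -
  assume u: "inj u"
  have "set ((replicate (Suc m) id)[k := u]) \<subseteq> insert u (set (replicate (Suc m) id))"
    by (rule set_update_subset_insert)
  then have "\<forall>f\<in>set ((replicate (Suc m) id)[k := u]). inj f" using u by (auto simp del: replicate_Suc)
  then show ?thesis unfolding em_elem_def incl_k_def by (simp del: replicate_Suc)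
qed

lemma incl_k_len[simp]: "length (incl_k m k u) = Suc m"
  unfolding incl_k_def by (simp del: replicate_Suc)

lemma incl_k_nth: "j \<le> m \<Longrightarrow> incl_k m k u ! j = (if j = k then u else id)"
  unfolding incl_k_def by (simp del: replicate_Suc add: nth_list_update)

lemma act_fix:
  assumes X: "em_sset X" and x: "x \<in> simp X m" and w: "em_elem m w"
    and H: "\<forall>k\<le>m. ksupp X m k (S k) x \<and> (\<forall>s\<in>S k. (w ! k) s = s)"
  shows "sact X m w x = x"
proof -
  define wr where "wr r = map (\<lambda>k. if k < r then w ! k else id) [0..<Suc m]" for r
  have lw: "length w = Suc m" using w em_elem_def by blast
  have wre: "em_elem m (wr r)" for r
    unfolding wr_def em_elem_map using em_elem_nth[OF w] by auto
  have "r \<le> Suc m \<Longrightarrow> sact X m (wr r) x = x" for r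
  proof (induction r)
    case 0
    have "wr 0 = replicate (Suc m) id" unfolding wr_def by (intro nth_equalityI) (auto simp del: replicate_Suc)
    then show ?case using es_id[OF X x] by simp
  next
    case (Suc r)
    then have r: "r \<le> m" by simp
    have ie: "em_elem m (incl_k m r (w ! r))" using incl_k_em em_elem_nth[OF w r] by blast
    have eq: "wr (Suc r) = map2 (\<circ>) (incl_k m r (w ! r)) (wr r)"
      by (intro nth_equalityI) (auto simp: wr_def incl_k_nth less_Suc_eq)
    have "sact X m (wr (Suc r)) x = sact X m (incl_k m r (w ! r)) (sact X m (wr r) x)"
      using es_comp[OF X ie wre x] eq by simp
    also have "\<dots> = sact X m (incl_k m r (w ! r)) x" using Suc by simp
    also have "\<dots> = x" using H r em_elem_nth[OF w r] unfolding ksupp_def by blast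
    finally show ?case .
  qed
  moreover have "wr (Suc m) = w" unfolding wr_def using lw by (intro nth_equalityI) auto
  ultimately show ?thesis by force
qed


definition nxt :: "(nat \<Rightarrow> nat set) \<Rightarrow> nat \<Rightarrow> nat list \<Rightarrow> nat" where
  "nxt P N xs = (LEAST x. x \<in> P (length xs mod N) \<and> x \<notin> set xs)"

primrec picks :: "(nat \<Rightarrow> nat set) \<Rightarrow> nat \<Rightarrow> nat \<Rightarrow> nat list" where
  "picks P N 0 = []"
| "picks P N (Suc s) = picks P N s @ [nxt P N (picks P N s)]"

lemma picks_len: "length (picks P N s) = s"
  by (induction s) auto

lemma picks_set: "set (picks P N s) = (\<lambda>t. nxt P N (picks P N t)) ` {..<s}"
  by (induction s) (auto simp: lessThan_Suc)

lemma nxt_prop: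
  assumes "\<forall>l<N. infinite (P l)" "0 < N"
  shows "nxt P N xs \<in> P (length xs mod N) \<and> nxt P N xs \<notin> set xs"
proof -
  have "infinite (P (length xs mod N) - set xs)"
    using assms by (intro Diff_infinite_finite) auto
  then obtain x where "x \<in> P (length xs mod N) - set xs"
    using infinite_imp_nonempty by blast
  then show ?thesis unfolding nxt_def using LeastI[of "\<lambda>x. x \<in> P (length xs mod N) \<and> x \<notin> set xs" x] by simp
qed

lemma disjoint_infinite_subsets:
  fixes P :: "nat \<Rightarrow> nat set"
  assumes inf: "\<forall>l<N. infinite (P l)"
  shows "\<exists>Q. (\<forall>l<N. Q l \<subseteq> P l \<and> infinite (Q l)) \<and> (\<forall>l<N. \<forall>l'<N. l \<noteq> l' \<longrightarrow> Q l \<inter> Q l' = {})"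
proof (cases "N = 0")
  case True then show ?thesis by auto
next
  case False
  then have N: "0 < N" by simp
  define q where "q t = nxt P N (picks P N t)" for t
  have qP: "q t \<in> P (t mod N)" for t
    using nxt_prop[OF inf N, of "picks P N t"] by (simp add: q_def picks_len)
  have qn: "q t \<notin> q ` {..<t}" for t
    using nxt_prop[OF inf N, of "picks P N t"] picks_set[of P N t] by (simp add: q_def)
  have qinj: "inj q"
  proof (rule injI)
    fix s t assume e: "q s = q t"
    show "s = t"
    proof (rule ccontr)
      assume "s \<noteq> t"
      then have "s < t \<or> t < s" by arith
      then show False using qn[of t] qn[of s] e by (metis imageI lessThan_iff)
    qed
  qed
  define Q where "Q l = q ` {s. s mod N = l}" for l
  have "Q l \<subseteq> P l \<and> infinite (Q l)" if l: "l < N" for l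
  proof
    show "Q l \<subseteq> P l" using qP unfolding Q_def by auto
    have "infinite {s. s mod N = l}"
      unfolding infinite_nat_iff_unbounded
    proof
      fix k
      have "Suc k \<le> N * Suc k" using mult_le_mono1[of 1 N "Suc k"] N by simp
      then have "l + N * Suc k > k" by linarith
      moreover have "(l + N * Suc k) mod N = l" using l by (simp only: mod_mult_self2 mod_less)
      ultimately show "\<exists>s>k. s \<in> {s. s mod N = l}" by blast
    qed
    then show "infinite (Q l)" unfolding Q_def
      using finite_imageD inj_on_subset[OF qinj] by blast
  qed
  moreover have "Q l \<inter> Q l' = {}" if "l \<noteq> l'" for l l'
    using that qinj unfolding Q_def inj_def by auto
  ultimately show ?thesis by blast
qed

lemma einj_patch:
  assumes f: "einj n f" and gi: "\<forall>i<n. inj_on (g i) (-S i)" and gT: "\<forall>i<n. g i ` (-S i) \<subseteq> T i"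
    and T1: "\<forall>i<n. \<forall>j<n. T i \<inter> (f ! j) ` S j = {}"
    and T2: "\<forall>i<n. \<forall>j<n. i \<noteq> j \<longrightarrow> T i \<inter> T j = {}"
  shows "einj n (map (\<lambda>i s. if s \<in> S i then (f ! i) s else g i s) [0..<n])"
proof (rule einj_I)
  fix i j s t assume i: "i < n" and j: "j < n" and
    e: "(map (\<lambda>i s. if s \<in> S i then (f ! i) s else g i s) [0..<n] ! i) s = (map (\<lambda>i s. if s \<in> S i then (f ! i) s else g i s) [0..<n] ! j) t"
  have e': "(if s \<in> S i then (f ! i) s else g i s) = (if t \<in> S j then (f ! j) t else g j t)"
    using e by (simp only: map_upt_nth[OF i] map_upt_nth[OF j])
  show "i = j \<and> s = t"
  proof (cases "s \<in> S i")
    case sS: True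
    show ?thesis
    proof (cases "t \<in> S j")
      case True
      then show ?thesis using sS e' einj_D[OF f i j] by simp
    next
      case False
      then have "g j t \<in> T j" using gT j by blast
      moreover have "(f ! i) s = g j t" using e' sS False by simp
      moreover have "(f ! i) s \<in> (f ! i) ` S i" using sS by blast
      ultimately have "g j t \<in> T j \<inter> (f ! i) ` S i" by simp
      then show ?thesis using T1 i j by blast
    qed
  next
    case sS: False
    then have gs: "g i s \<in> T i" using gT i by blast
    show ?thesis
    proof (cases "t \<in> S j")
      case True
      then have "(f ! j) t \<in> (f ! j) ` S j" by blast
      moreover have "g i s = (f ! j) t" using e' sS True by simp
      ultimately have "g i s \<in> T i \<inter> (f ! j) ` S j" using gs by simp
      then show ?thesis using T1 i j by blast
    next
      case False
      then have gt: "g j t \<in> T j" using gT j by blast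
      show ?thesis
      proof (cases "i = j")
        case True
        have "g i s = g i t" using e' sS False True by simp
        moreover have "s \<in> -S i" "t \<in> -S i" using sS False True by auto
        ultimately have "s = t" using gi i unfolding inj_on_def by blast
        then show ?thesis using True by simp
      next
        case ne: False
        have "g i s = g j t" using e' sS False by simp
        then have "g i s \<in> T i \<inter> T j" using gs gt by simp
        then show ?thesis using T2 i j ne by blast
      qed
    qed
  qed
qed simp

definition idpatch :: "nat \<Rightarrow> (nat \<Rightarrow> nat set) \<Rightarrow> (nat \<Rightarrow> nat) list" where
  "idpatch n D = map (\<lambda>i t. if t \<in> D i then t else enumerate (-(\<Union>j<n. D j)) (prod_encode (i, t))) [0..<n]"

lemma idpatch_einj:
  assumes dis: "\<forall>i<n. \<forall>j<n. i \<noteq> j \<longrightarrow> D i \<inter> D j = {}" and inf: "infinite (-(\<Union>j<n. D j))"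
  shows "einj n (idpatch n D)"
proof (rule einj_I)
  fix i j s t assume i: "i < n" and j: "j < n" and e0: "(idpatch n D ! i) s = (idpatch n D ! j) t"
  let ?R = "-(\<Union>j<n. D j)"
  have e: "(if s \<in> D i then s else enumerate ?R (prod_encode (i, s))) = (if t \<in> D j then t else enumerate ?R (prod_encode (j, t)))"
    using e0 unfolding idpatch_def by (simp only: map_upt_nth[OF i] map_upt_nth[OF j])
  have inR: "enumerate ?R k \<in> ?R" for k using enumerate_in_set[OF inf] .
  show "i = j \<and> s = t"
  proof (cases "s \<in> D i")
    case sD: True
    show ?thesis
    proof (cases "t \<in> D j")
      case True
      then have "s = t" using sD e by simp
      then have "s \<in> D i \<inter> D j" using sD True by simp
      then show ?thesis using dis i j \<open>s = t\<close> by blast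
    next
      case False
      then have "s = enumerate ?R (prod_encode (j, t))" using sD e by simp
      then have "s \<in> ?R" using inR by simp
      then show ?thesis using sD i by blast
    qed
  next
    case sD: False
    show ?thesis
    proof (cases "t \<in> D j")
      case True
      then have "t = enumerate ?R (prod_encode (i, s))" using sD e by simp
      then have "t \<in> ?R" using inR by simp
      then show ?thesis using True j by blast
    next
      case False
      then have "enumerate ?R (prod_encode (i, s)) = enumerate ?R (prod_encode (j, t))" using sD e by simp
      then have "prod_encode (i, s) = prod_encode (j, t)" using inj_enumerate[OF inf] unfolding inj_def by blast
      then show ?thesis by simp
    qed
  qed
qed (simp add: idpatch_def)

lemma idpatch_nth: "i < n \<Longrightarrow> t \<in> D i \<Longrightarrow> (idpatch n D ! i) t = t"
  by (simp add: idpatch_def)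

lemma idpatch_len: "length (idpatch n D) = n" by (simp add: idpatch_def)


lemma qgen_restrict:
  assumes ES: "\<forall>X\<in>set Xs. em_sset X" and pe: "(e, y) \<in> qcar Xs m" and pz: "(z, y) \<in> qcar Xs m"
    and supp: "\<forall>k\<le>m. \<forall>i<length Xs. ksupp (Xs ! i) m k (S k i) (y ! i)"
    and agree: "\<forall>k\<le>m. \<forall>i<length Xs. \<forall>s\<in>S k i. (z ! k ! i) s = (e ! k ! i) s"
    and sub: "\<forall>k\<le>m. \<forall>i<length Xs. \<forall>s. s \<notin> S k i \<longrightarrow> (z ! k ! i) s \<in> (e ! k ! i) ` (-S k i)"
  shows "qgen Xs m (e, y) (z, y)"
proof -
  let ?n = "length Xs"
  note ce = pe[unfolded qcar_iff] and cz = pz[unfolded qcar_iff]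
  define w where "w k i s = (if s \<in> S k i then s else inv (e ! k ! i) ((z ! k ! i) s))" for k i s
  define us where "us = map (\<lambda>i. map (\<lambda>k. w k i) [0..<Suc m]) [0..<?n]"
  have ew: "(e ! k ! i) (w k i s) = (z ! k ! i) s" if k: "k \<le> m" and i: "i < ?n" for k i s
  proof (cases "s \<in> S k i")
    case True then show ?thesis using agree k i by (simp add: w_def)
  next
    case False
    then have "(z ! k ! i) s \<in> range (e ! k ! i)" using sub k i by blast
    then show ?thesis using False by (simp add: w_def f_inv_into_f)
  qed
  have wi: "inj (w k i)" if k: "k \<le> m" and i: "i < ?n" for k i
  proof (rule injI)
    fix s t assume "w k i s = w k i t"
    then have "(z ! k ! i) s = (z ! k ! i) t" using ew[OF k i] by metis
    then show "s = t" using einj_inj[of ?n "z ! k" i] cz k i unfolding inj_def by blast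
  qed
  have wS: "\<forall>s\<in>S k i. w k i s = s" for k i by (simp add: w_def)
  have usn: "us ! i = map (\<lambda>k. w k i) [0..<Suc m]" if "i < ?n" for i
    using that by (simp add: us_def)
  have use: "\<forall>u\<in>set us. em_elem m u"
    unfolding us_def using wi by (auto simp: em_elem_map)
  have A: "map (\<lambda>i. sact (Xs ! i) m (us ! i) (y ! i)) [0..<?n] = y"
  proof (rule nth_equalityI)
    show "length (map (\<lambda>i. sact (Xs ! i) m (us ! i) (y ! i)) [0..<?n]) = length y" using ce by simp
    fix i assume "i < length (map (\<lambda>i. sact (Xs ! i) m (us ! i) (y ! i)) [0..<?n])"
    then have i: "i < ?n" by simp
    have X: "em_sset (Xs ! i)" using ES i by simp
    have ue: "em_elem m (us ! i)" using use i by (simp add: us_def)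
    have "sact (Xs ! i) m (us ! i) (y ! i) = y ! i"
    proof (rule act_fix[OF X _ ue, where S="\<lambda>k. S k i"])
      show "y ! i \<in> simp (Xs ! i) m" using ce i by blast
      show "\<forall>k\<le>m. ksupp (Xs ! i) m k (S k i) (y ! i) \<and> (\<forall>s\<in>S k i. (us ! i ! k) s = s)"
        using supp i wS by (simp add: usn less_Suc_eq_le)
    qed
    then show "map (\<lambda>i. sact (Xs ! i) m (us ! i) (y ! i)) [0..<?n] ! i = y ! i" using i by simp
  qed
  have B: "map (\<lambda>k. map (\<lambda>j. (e ! k ! j) \<circ> (us ! j ! k)) [0..<?n]) [0..<Suc m] = z"
  proof (rule nth_equalityI)
    show "length (map (\<lambda>k. map (\<lambda>j. (e ! k ! j) \<circ> (us ! j ! k)) [0..<?n]) [0..<Suc m]) = length z" using cz by simp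
    fix k assume "k < length (map (\<lambda>k. map (\<lambda>j. (e ! k ! j) \<circ> (us ! j ! k)) [0..<?n]) [0..<Suc m])"
    then have k: "k \<le> m" by simp
    have lz: "length (z ! k) = ?n" using cz k einj_len by blast
    show "map (\<lambda>k. map (\<lambda>j. (e ! k ! j) \<circ> (us ! j ! k)) [0..<?n]) [0..<Suc m] ! k = z ! k"
    proof (rule nth_equalityI)
      show "length (map (\<lambda>k. map (\<lambda>j. (e ! k ! j) \<circ> (us ! j ! k)) [0..<?n]) [0..<Suc m] ! k) = length (z ! k)"
        using k lz by (simp add: map_upt_nth)
      fix j assume "j < length (map (\<lambda>k. map (\<lambda>j. (e ! k ! j) \<circ> (us ! j ! k)) [0..<?n]) [0..<Suc m] ! k)"
      then have j: "j < ?n" using k by (simp add: map_upt_nth)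
      have "us ! j ! k = w k j" using j k by (simp add: usn less_Suc_eq_le)
      then have "(e ! k ! j) \<circ> (us ! j ! k) = z ! k ! j" using ew[OF k j] by auto
      then show "map (\<lambda>k. map (\<lambda>j. (e ! k ! j) \<circ> (us ! j ! k)) [0..<?n]) [0..<Suc m] ! k ! j = z ! k ! j"
        using j k by (simp add: less_Suc_eq_le)
    qed
  qed
  show ?thesis unfolding qgen_def
    apply (rule exI[of _ e], rule exI[of _ y], rule exI[of _ us])
    using pe use A B by (simp add: us_def)
qed


definition mk :: "nat \<Rightarrow> nat \<Rightarrow> (nat \<Rightarrow> nat \<Rightarrow> nat \<Rightarrow> nat) \<Rightarrow> (nat \<Rightarrow> nat) list list" where
  "mk m n F = map (\<lambda>k. map (\<lambda>i. F k i) [0..<n]) [0..<Suc m]"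

lemma mk_nth: "k \<le> m \<Longrightarrow> i < n \<Longrightarrow> mk m n F ! k ! i = F k i"
  unfolding mk_def by (simp add: less_Suc_eq_le del: upt_Suc)

lemma mk_nth1: "k \<le> m \<Longrightarrow> mk m n F ! k = map (\<lambda>i. F k i) [0..<n]"
  unfolding mk_def by (simp add: less_Suc_eq_le del: upt_Suc)

lemma mk_len[simp]: "length (mk m n F) = Suc m" unfolding mk_def by simp

lemma enum_bij_image:
  fixes C G :: "nat set"
  assumes C: "infinite C" and G: "infinite G"
  shows "inj_on (enumerate G \<circ> inv_into UNIV (enumerate C)) C \<and> (enumerate G \<circ> inv_into UNIV (enumerate C)) ` C = G"
proof -
  have bC: "bij_betw (enumerate C) UNIV C" by (rule bij_enumerate[OF C])
  have bG: "bij_betw (enumerate G) UNIV G" by (rule bij_enumerate[OF G])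
  have "bij_betw (inv_into UNIV (enumerate C)) C UNIV" by (rule bij_betw_inv_into[OF bC])
  then have "bij_betw (enumerate G \<circ> inv_into UNIV (enumerate C)) C G" using bG by (rule bij_betw_trans)
  then show ?thesis unfolding bij_betw_def by blast
qed

lemma qrel_trans: "qrel Xs m a b \<Longrightarrow> qrel Xs m b c \<Longrightarrow> qrel Xs m a c"
  unfolding qrel_def by (rule equivclp_trans)

lemma qrel_sym: "qrel Xs m a b \<Longrightarrow> qrel Xs m b a"
  unfolding qrel_def by (rule equivclp_sym)

lemma qgen_qrel: "qgen Xs m a b \<Longrightarrow> qrel Xs m a b"
  unfolding qrel_def by (rule r_into_equivclp)

lemma qrel_agree:
  assumes ES: "\<forall>X\<in>set Xs. em_sset X" and pe: "(e, y) \<in> qcar Xs m" and pe': "(e', y) \<in> qcar Xs m"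
    and Sco: "\<forall>k\<le>m. \<forall>i<length Xs. infinite (-S k i)"
    and supp: "\<forall>k\<le>m. \<forall>i<length Xs. ksupp (Xs ! i) m k (S k i) (y ! i)"
    and agree: "\<forall>k\<le>m. \<forall>i<length Xs. \<forall>s\<in>S k i. (e ! k ! i) s = (e' ! k ! i) s"
  shows "qrel Xs m (e, y) (e', y)"
proof -
  let ?n = "length Xs"
  note ce = pe[unfolded qcar_iff] and ce' = pe'[unfolded qcar_iff]
  define P where "P k l = (if l < ?n then (e ! k ! l) ` (-S k l) else (e' ! k ! (l - ?n)) ` (-S k (l - ?n)))" for k l
  have Pinf: "\<forall>l<2 * ?n. infinite (P k l)" if k: "k \<le> m" for k
  proof (intro allI impI)
    fix l assume l: "l < 2 * ?n"
    show "infinite (P k l)"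
    proof (cases "l < ?n")
      case True
      have "inj (e ! k ! l)" using ce k True einj_inj by blast
      then show ?thesis using True Sco k by (simp add: P_def finite_image_iff inj_on_subset)
    next
      case False
      then have l': "l - ?n < ?n" using l by simp
      have "inj (e' ! k ! (l - ?n))" using ce' k l' einj_inj by blast
      then show ?thesis using False l' Sco k by (simp add: P_def finite_image_iff inj_on_subset)
    qed
  qed
  have "\<forall>k. \<exists>Qk. k \<le> m \<longrightarrow> (\<forall>l<2 * ?n. Qk l \<subseteq> P k l \<and> infinite (Qk l)) \<and>
      (\<forall>l<2 * ?n. \<forall>l'<2 * ?n. l \<noteq> l' \<longrightarrow> Qk l \<inter> Qk l' = {})"
  proof
    fix k
    show "\<exists>Qk. k \<le> m \<longrightarrow> (\<forall>l<2 * ?n. Qk l \<subseteq> P k l \<and> infinite (Qk l)) \<and>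
      (\<forall>l<2 * ?n. \<forall>l'<2 * ?n. l \<noteq> l' \<longrightarrow> Qk l \<inter> Qk l' = {})"
    proof (cases "k \<le> m")
      case True
      from disjoint_infinite_subsets[OF Pinf[OF True]] show ?thesis by blast
    qed simp
  qed
  from choice[OF this] obtain Q where Q0: "\<forall>k. k \<le> m \<longrightarrow> (\<forall>l<2 * ?n. Q k l \<subseteq> P k l \<and> infinite (Q k l)) \<and>
      (\<forall>l<2 * ?n. \<forall>l'<2 * ?n. l \<noteq> l' \<longrightarrow> Q k l \<inter> Q k l' = {})"
    by blast
  have Q: "(\<forall>l<2 * ?n. Q k l \<subseteq> P k l \<and> infinite (Q k l)) \<and>
      (\<forall>l<2 * ?n. \<forall>l'<2 * ?n. l \<noteq> l' \<longrightarrow> Q k l \<inter> Q k l' = {})" if "k \<le> m" for k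
    using Q0 that by blast
  define E where "E k i = Q k i" for k i
  define E' where "E' k i = Q k (?n + i)" for k i
  define G where "G k i = E k i \<union> E' k i" for k i
  have Esub: "E k i \<subseteq> (e ! k ! i) ` (-S k i)" and Einf: "infinite (E k i)"
    if "k \<le> m" "i < ?n" for k i
  proof -
    have l: "i < 2 * ?n" using that by simp
    have "Q k i \<subseteq> P k i \<and> infinite (Q k i)" using Q[OF that(1)] l by blast
    then show "E k i \<subseteq> (e ! k ! i) ` (-S k i)" "infinite (E k i)" using that(2) by (simp_all add: E_def P_def)
  qed
  have E'sub: "E' k i \<subseteq> (e' ! k ! i) ` (-S k i)" and E'inf: "infinite (E' k i)"
    if "k \<le> m" "i < ?n" for k i
  proof -
    have l: "?n + i < 2 * ?n" using that by simp
    have "Q k (?n + i) \<subseteq> P k (?n + i) \<and> infinite (Q k (?n + i))" using Q[OF that(1)] l by blast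
    then show "E' k i \<subseteq> (e' ! k ! i) ` (-S k i)" "infinite (E' k i)" by (simp_all add: E'_def P_def)
  qed
  have Qdis: "Q k l \<inter> Q k l' = {}" if "k \<le> m" "l < 2 * ?n" "l' < 2 * ?n" "l \<noteq> l'" for k l l'
    using Q[OF that(1)] that by blast
  have EEdis: "E k i \<inter> E k j = {}" "E' k i \<inter> E' k j = {}" "E k i \<inter> E' k j = {}" "E' k i \<inter> E k j = {}"
    if "k \<le> m" "i < ?n" "j < ?n" "i \<noteq> j" for k i j
    using Qdis[OF that(1)] that unfolding E_def E'_def by auto
  have EE'dis: "E k i \<inter> E' k i = {}" if "k \<le> m" "i < ?n" for k i
  proof -
    have "Xs \<noteq> []" using that by auto
    then show ?thesis using Qdis[OF that(1), of i "?n + i"] that unfolding E_def E'_def by simp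
  qed
  have ES1: "E k i \<inter> (e ! k ! j) ` S k j = {}" if k: "k \<le> m" and i: "i < ?n" and j: "j < ?n" for k i j
  proof -
    have "False" if xE: "x \<in> E k i" and xS: "x \<in> (e ! k ! j) ` S k j" for x
    proof -
      obtain c where c: "c \<notin> S k i" "x = (e ! k ! i) c" using Esub[OF k i] xE by blast
      obtain d where d: "d \<in> S k j" "x = (e ! k ! j) d" using xS by blast
      have "i = j \<and> c = d" using einj_D[of ?n "e ! k" i j c d] ce k i j c d by simp
      then show False using c d by simp
    qed
    then show ?thesis by blast
  qed
  have ES2: "E' k i \<inter> (e ! k ! j) ` S k j = {}" if k: "k \<le> m" and i: "i < ?n" and j: "j < ?n" for k i j
  proof -
    have "False" if xE: "x \<in> E' k i" and xS: "x \<in> (e ! k ! j) ` S k j" for x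
    proof -
      obtain c where c: "c \<notin> S k i" "x = (e' ! k ! i) c" using E'sub[OF k i] xE by blast
      obtain d where d: "d \<in> S k j" "x = (e ! k ! j) d" using xS by blast
      have "x = (e' ! k ! j) d" using d agree k j by simp
      then have "i = j \<and> c = d" using einj_D[of ?n "e' ! k" i j c d] ce' k i j c by simp
      then show False using c d by simp
    qed
    then show ?thesis by blast
  qed
  define g where "g k i = enumerate (G k i) \<circ> inv_into UNIV (enumerate (-S k i))" for k i
  have Ginf: "infinite (G k i)" if "k \<le> m" "i < ?n" for k i
    using Einf[OF that] unfolding G_def by simp
  have gprop: "inj_on (g k i) (-S k i) \<and> g k i ` (-S k i) = G k i" if "k \<le> m" "i < ?n" for k i
    unfolding g_def by (rule enum_bij_image[OF _ Ginf[OF that]]) (use Sco that in blast)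
  define z1 where "z1 = mk m ?n (\<lambda>k i s. if s \<in> S k i then (e ! k ! i) s else enumerate (E k i) s)"
  define z2 where "z2 = mk m ?n (\<lambda>k i s. if s \<in> S k i then (e ! k ! i) s else enumerate (E' k i) s)"
  define h where "h = mk m ?n (\<lambda>k i s. if s \<in> S k i then (e ! k ! i) s else g k i s)"
  have einjE: "einj ?n (e ! k)" if "k \<le> m" for k using ce that by blast
  have cz1: "(z1, y) \<in> qcar Xs m"
    unfolding qcar_iff
  proof (intro conjI allI impI)
    fix k assume k: "k \<le> m"
    show "einj ?n (z1 ! k)" unfolding z1_def mk_nth1[OF k]
    proof (rule einj_patch[OF einjE[OF k], where T="E k"])
      show "\<forall>i<?n. inj_on (\<lambda>s. enumerate (E k i) s) (- S k i)"
        using Einf[OF k] inj_enumerate by (blast intro: inj_on_subset)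
      show "\<forall>i<?n. (\<lambda>s. enumerate (E k i) s) ` (- S k i) \<subseteq> E k i"
        using Einf[OF k] enumerate_in_set by blast
      show "\<forall>i<?n. \<forall>j<?n. E k i \<inter> (e ! k ! j) ` S k j = {}" using ES1[OF k] by blast
      show "\<forall>i<?n. \<forall>j<?n. i \<noteq> j \<longrightarrow> E k i \<inter> E k j = {}" using EEdis(1)[OF k] by blast
    qed
  qed (use ce in \<open>simp_all add: z1_def\<close>)
  have cz2: "(z2, y) \<in> qcar Xs m"
    unfolding qcar_iff
  proof (intro conjI allI impI)
    fix k assume k: "k \<le> m"
    show "einj ?n (z2 ! k)" unfolding z2_def mk_nth1[OF k]
    proof (rule einj_patch[OF einjE[OF k], where T="E' k"])
      show "\<forall>i<?n. inj_on (\<lambda>s. enumerate (E' k i) s) (- S k i)"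
        using E'inf[OF k] inj_enumerate by (blast intro: inj_on_subset)
      show "\<forall>i<?n. (\<lambda>s. enumerate (E' k i) s) ` (- S k i) \<subseteq> E' k i"
        using E'inf[OF k] enumerate_in_set by blast
      show "\<forall>i<?n. \<forall>j<?n. E' k i \<inter> (e ! k ! j) ` S k j = {}" using ES2[OF k] by blast
      show "\<forall>i<?n. \<forall>j<?n. i \<noteq> j \<longrightarrow> E' k i \<inter> E' k j = {}" using EEdis(2)[OF k] by blast
    qed
  qed (use ce in \<open>simp_all add: z2_def\<close>)
  have ch: "(h, y) \<in> qcar Xs m"
    unfolding qcar_iff
  proof (intro conjI allI impI)
    fix k assume k: "k \<le> m"
    show "einj ?n (h ! k)" unfolding h_def mk_nth1[OF k]
    proof (rule einj_patch[OF einjE[OF k], where T="G k"])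
      show "\<forall>i<?n. inj_on (g k i) (- S k i)" using gprop[OF k] by blast
      show "\<forall>i<?n. g k i ` (- S k i) \<subseteq> G k i" using gprop[OF k] by blast
      show "\<forall>i<?n. \<forall>j<?n. G k i \<inter> (e ! k ! j) ` S k j = {}" using ES1[OF k] ES2[OF k] unfolding G_def by blast
      show "\<forall>i<?n. \<forall>j<?n. i \<noteq> j \<longrightarrow> G k i \<inter> G k j = {}" using EEdis[OF k] unfolding G_def by blast
    qed
  qed (use ce in \<open>simp_all add: h_def\<close>)
  have g1: "qgen Xs m (e, y) (z1, y)"
  proof (rule qgen_restrict[OF ES pe cz1 supp])
    show "\<forall>k\<le>m. \<forall>i<?n. \<forall>s\<in>S k i. (z1 ! k ! i) s = (e ! k ! i) s" by (simp add: z1_def mk_nth)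
    show "\<forall>k\<le>m. \<forall>i<?n. \<forall>s. s \<notin> S k i \<longrightarrow> (z1 ! k ! i) s \<in> (e ! k ! i) ` (- S k i)"
      using Esub Einf enumerate_in_set by (simp add: z1_def mk_nth) blast
  qed
  have hC: "(h ! k ! i) ` (-S k i) = G k i" if "k \<le> m" "i < ?n" for k i
  proof -
    have "(h ! k ! i) ` (-S k i) = g k i ` (-S k i)" using that by (auto simp: h_def mk_nth)
    then show ?thesis using gprop[OF that] by simp
  qed
  have g2: "qgen Xs m (h, y) (z1, y)"
  proof (rule qgen_restrict[OF ES ch cz1 supp])
    show "\<forall>k\<le>m. \<forall>i<?n. \<forall>s\<in>S k i. (z1 ! k ! i) s = (h ! k ! i) s" by (simp add: z1_def h_def mk_nth)
    show "\<forall>k\<le>m. \<forall>i<?n. \<forall>s. s \<notin> S k i \<longrightarrow> (z1 ! k ! i) s \<in> (h ! k ! i) ` (- S k i)"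
      using hC Einf enumerate_in_set by (simp add: z1_def mk_nth G_def) blast
  qed
  have g3: "qgen Xs m (h, y) (z2, y)"
  proof (rule qgen_restrict[OF ES ch cz2 supp])
    show "\<forall>k\<le>m. \<forall>i<?n. \<forall>s\<in>S k i. (z2 ! k ! i) s = (h ! k ! i) s" by (simp add: z2_def h_def mk_nth)
    show "\<forall>k\<le>m. \<forall>i<?n. \<forall>s. s \<notin> S k i \<longrightarrow> (z2 ! k ! i) s \<in> (h ! k ! i) ` (- S k i)"
      using hC E'inf enumerate_in_set by (simp add: z2_def mk_nth G_def) blast
  qed
  have g4: "qgen Xs m (e', y) (z2, y)"
  proof (rule qgen_restrict[OF ES pe' cz2 supp])
    show "\<forall>k\<le>m. \<forall>i<?n. \<forall>s\<in>S k i. (z2 ! k ! i) s = (e' ! k ! i) s" using agree by (simp add: z2_def mk_nth)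
    show "\<forall>k\<le>m. \<forall>i<?n. \<forall>s. s \<notin> S k i \<longrightarrow> (z2 ! k ! i) s \<in> (e' ! k ! i) ` (- S k i)"
      using E'sub E'inf enumerate_in_set by (simp add: z2_def mk_nth) blast
  qed
  show ?thesis using qgen_qrel[OF g1] qrel_sym[OF qgen_qrel[OF g2]] qgen_qrel[OF g3] qrel_sym[OF qgen_qrel[OF g4]]
    by (meson qrel_trans)
qed


lemma act_agree:
  assumes X: "em_sset X" and x: "x \<in> simp X m" and a: "em_elem m a" and b: "em_elem m b"
    and H: "\<forall>k\<le>m. infinite (-S k) \<and> ksupp X m k (S k) x \<and> (\<forall>s\<in>S k. (a ! k) s = (b ! k) s)"
  shows "sact X m a x = sact X m b x"
proof -
  define ea where "ea = map (\<lambda>k. [a ! k]) [0..<Suc m]"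
  define eb where "eb = map (\<lambda>k. [b ! k]) [0..<Suc m]"
  have la: "length a = Suc m" using a em_elem_def by blast
  have lb: "length b = Suc m" using b em_elem_def by blast
  have e1: "einj 1 [f]" if "inj f" for f :: "nat \<Rightarrow> nat"
  proof (rule einj_I)
    fix i j s t assume "i < 1" "j < 1" "([f] ! i) s = ([f] ! j) t"
    then show "i = j \<and> s = t" using that unfolding inj_def by simp
  qed simp
  have ca: "(ea, [x]) \<in> qcar [X] m" unfolding qcar_iff using x e1 em_elem_nth[OF a]
    by (simp add: ea_def less_Suc_eq_le del: upt_Suc)
  have cb: "(eb, [x]) \<in> qcar [X] m" unfolding qcar_iff using x e1 em_elem_nth[OF b]
    by (simp add: eb_def less_Suc_eq_le del: upt_Suc)
  have ES: "\<forall>X\<in>set [X]. em_sset X" using X by simp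
  have "qrel [X] m (ea, [x]) (eb, [x])"
  proof (rule qrel_agree[OF ES ca cb, where S="\<lambda>k i. S k"])
    show "\<forall>k\<le>m. \<forall>i<length [X]. infinite (- S k)" using H by simp
    show "\<forall>k\<le>m. \<forall>i<length [X]. ksupp ([X] ! i) m k (S k) ([x] ! i)" using H by simp
    show "\<forall>k\<le>m. \<forall>i<length [X]. \<forall>s\<in>S k. (ea ! k ! i) s = (eb ! k ! i) s"
      using H by (simp add: ea_def eb_def less_Suc_eq_le del: upt_Suc)
  qed
  then have P: "Phi [X] m (ea, [x]) = Phi [X] m (eb, [x])" using qrel_Phi[OF ES] by blast
  have ma: "map (\<lambda>k. ea ! k ! 0) [0..<Suc m] = a" using la
    by (intro nth_equalityI) (simp_all add: ea_def del: upt_Suc)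
  have mb: "map (\<lambda>k. eb ! k ! 0) [0..<Suc m] = b" using lb
    by (intro nth_equalityI) (simp_all add: eb_def del: upt_Suc)
  have "Phi [X] m (ea, [x]) ! 0 = Phi [X] m (eb, [x]) ! 0" using P by simp
  then show ?thesis using Phi_nth[of 0 "[X]" m] ma mb by simp
qed

lemma mild_supps:
  assumes "mild X" "x \<in> simp X m"
  obtains M where "\<forall>k\<le>m. infinite (-M k) \<and> ksupp X m k (M k) x"
proof -
  have "\<forall>k. \<exists>A. k \<le> m \<longrightarrow> infinite (-A) \<and> ksupp X m k A x"
  proof
    fix k show "\<exists>A. k \<le> m \<longrightarrow> infinite (-A) \<and> ksupp X m k A x"
      using assms unfolding mild_def by (cases "k \<le> m") blast+
  qed
  from choice[OF this] obtain M where "\<forall>k. k \<le> m \<longrightarrow> infinite (-M k) \<and> ksupp X m k (M k) x" by blast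
  then show ?thesis using that by blast
qed

lemma act_incl_agree:
  assumes X: "em_sset X" and mX: "mild X" and x: "x \<in> simp X m" and k: "k \<le> m"
    and u: "inj u" and v: "inj v" and T: "infinite (-T)" and sT: "ksupp X m k T x"
    and ag: "\<forall>t\<in>T. u t = v t"
  shows "sact X m (incl_k m k u) x = sact X m (incl_k m k v) x"
proof -
  obtain M where M: "\<forall>k\<le>m. infinite (-M k) \<and> ksupp X m k (M k) x" using mild_supps[OF mX x] by blast
  show ?thesis
  proof (rule act_agree[OF X x incl_k_em[OF u] incl_k_em[OF v], where S="\<lambda>j. if j = k then T else M j"])
    show "\<forall>j\<le>m. infinite (- (if j = k then T else M j)) \<and> ksupp X m j (if j = k then T else M j) x \<and>
        (\<forall>s\<in>(if j = k then T else M j). (incl_k m k u ! j) s = (incl_k m k v ! j) s)"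
      using M T sT ag by (simp add: incl_k_nth)
  qed
qed

lemma incl_k_id: "incl_k m k id = replicate (Suc m) id"
  by (intro nth_equalityI) (simp_all add: incl_k_nth less_Suc_eq_le del: replicate_Suc)

lemma ksupp_Int:
  assumes X: "em_sset X" and mX: "mild X" and x: "x \<in> simp X m" and k: "k \<le> m"
    and A: "infinite (-A)" and B: "infinite (-B)" and sA: "ksupp X m k A x" and sB: "ksupp X m k B x"
  shows "ksupp X m k (A \<inter> B) x"
  unfolding ksupp_def
proof (intro allI impI, elim conjE)
  fix u :: "nat \<Rightarrow> nat" assume u: "inj u" and fix0: "\<forall>a\<in>A \<inter> B. u a = a"
  define Y where "Y = -(u ` A)"
  have "u ` (-A) \<subseteq> Y" unfolding Y_def using u by (auto simp: inj_eq)
  moreover have "infinite (u ` (-A))" using A u by (simp add: finite_image_iff inj_on_subset)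
  ultimately have Yinf: "infinite Y" using finite_subset by blast
  define W where "W = -B"
  define Ye where "Ye = range (enumerate Y \<circ> (\<lambda>t. 2 * t))"
  define Yo where "Yo = range (enumerate Y \<circ> (\<lambda>t. 2 * t + 1))"
  have ie: "inj (enumerate Y)" by (rule inj_enumerate[OF Yinf])
  have "inj (enumerate Y \<circ> (\<lambda>t. 2 * t))" using ie by (intro inj_compose) (auto simp: inj_def)
  then have Yeinf: "infinite Ye" unfolding Ye_def using finite_imageD infinite_UNIV_nat by blast
  have "inj (enumerate Y \<circ> (\<lambda>t. 2 * t + 1))" using ie by (intro inj_compose) (auto simp: inj_def)
  then have Yoinf: "infinite Yo" unfolding Yo_def using finite_imageD infinite_UNIV_nat by blast
  have "Ye \<inter> Yo = {}"
  proof -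
    have "enumerate Y (2 * a) \<noteq> enumerate Y (2 * b + 1)" for a b
    proof
      assume "enumerate Y (2 * a) = enumerate Y (2 * b + 1)"
      then have "2 * a = 2 * b + 1" using ie unfolding inj_def by blast
      then show False by arith
    qed
    then show ?thesis unfolding Ye_def Yo_def by auto
  qed
  then have "(W - Ye) \<union> (W - Yo) = W" by blast
  moreover have "infinite W" using B W_def by simp
  ultimately have "infinite (W - Ye) \<or> infinite (W - Yo)" by (metis infinite_Un)
  moreover have "Ye \<subseteq> Y" "Yo \<subseteq> Y" unfolding Ye_def Yo_def using enumerate_in_set[OF Yinf] by auto
  ultimately obtain Z where Z: "Z \<subseteq> Y" "infinite Z" "infinite (W - Z)"
    using Yeinf Yoinf by blast
  define g1 where "g1 = enumerate Z"
  define g2 where "g2 = enumerate (W - Z)"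
  have g1Z: "g1 t \<in> Z" for t unfolding g1_def by (rule enumerate_in_set[OF Z(2)])
  have g2W: "g2 t \<in> W - Z" for t unfolding g2_def by (rule enumerate_in_set[OF Z(3)])
  have g1i: "inj g1" unfolding g1_def by (rule inj_enumerate[OF Z(2)])
  have g2i: "inj g2" unfolding g2_def by (rule inj_enumerate[OF Z(3)])
  define v1 where "v1 t = (if t \<in> A then u t else g1 t)" for t
  define v2 where "v2 t = (if t \<in> B then v1 t else g2 t)" for t
  define v3 where "v3 t = (if t \<in> B then t else g2 t)" for t
  have v1i: "inj v1"
  proof (rule injI)
    fix s t assume e: "v1 s = v1 t"
    have nA: "g1 t \<notin> u ` A" for t using g1Z Z(1) unfolding Y_def by blast
    show "s = t"
    proof (cases "s \<in> A"; cases "t \<in> A")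
      assume "s \<in> A" "t \<in> A" then show ?thesis using e u by (simp add: v1_def inj_eq)
    next
      assume sA: "s \<in> A" and tA: "t \<notin> A"
      then have "u s = g1 t" using e by (simp add: v1_def)
      then show ?thesis using nA[of t] sA by (metis imageI)
    next
      assume sA: "s \<notin> A" and tA: "t \<in> A"
      then have "g1 s = u t" using e by (simp add: v1_def)
      then show ?thesis using nA[of s] tA by (metis imageI)
    next
      assume "s \<notin> A" "t \<notin> A" then show ?thesis using e g1i by (simp add: v1_def inj_eq)
    qed
  qed
  have v1B: "v1 t \<notin> W - Z" if "t \<in> B" for t
  proof (cases "t \<in> A")
    case True then have "v1 t = t" using fix0 that by (simp add: v1_def)
    then show ?thesis using that W_def by simp
  next
    case False then show ?thesis using g1Z by (simp add: v1_def)
  qed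
  have v2i: "inj v2"
  proof (rule injI)
    fix s t assume e: "v2 s = v2 t"
    show "s = t"
    proof (cases "s \<in> B"; cases "t \<in> B")
      assume "s \<in> B" "t \<in> B" then show ?thesis using e v1i by (simp add: v2_def inj_eq)
    next
      assume "s \<in> B" "t \<notin> B" then show ?thesis using e v1B[of s] g2W[of t] by (simp add: v2_def)
    next
      assume "s \<notin> B" "t \<in> B" then show ?thesis using e v1B[of t] g2W[of s] by (simp add: v2_def)
    next
      assume "s \<notin> B" "t \<notin> B" then show ?thesis using e g2i by (simp add: v2_def inj_eq)
    qed
  qed
  have v3i: "inj v3"
  proof (rule injI)
    fix s t assume e: "v3 s = v3 t"
    show "s = t"
    proof (cases "s \<in> B"; cases "t \<in> B")
      assume "s \<in> B" "t \<in> B" then show ?thesis using e by (simp add: v3_def)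
    next
      assume "s \<in> B" "t \<notin> B" then show ?thesis using e g2W[of t] W_def by (simp add: v3_def)
    next
      assume "s \<notin> B" "t \<in> B" then show ?thesis using e g2W[of s] W_def by (simp add: v3_def)
    next
      assume "s \<notin> B" "t \<notin> B" then show ?thesis using e g2i by (simp add: v3_def inj_eq)
    qed
  qed
  have "sact X m (incl_k m k u) x = sact X m (incl_k m k v1) x"
    by (rule act_incl_agree[OF X mX x k u v1i A sA]) (simp add: v1_def)
  also have "\<dots> = sact X m (incl_k m k v2) x"
    by (rule act_incl_agree[OF X mX x k v1i v2i B sB]) (simp add: v2_def)
  also have "\<dots> = sact X m (incl_k m k v3) x"
  proof (rule act_incl_agree[OF X mX x k v2i v3i A sA])
    show "\<forall>t\<in>A. v2 t = v3 t" using fix0 by (simp add: v2_def v3_def v1_def)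
  qed
  also have "\<dots> = sact X m (incl_k m k id) x"
    by (rule act_incl_agree[OF X mX x k v3i inj_on_id B sB]) (simp add: v3_def)
  also have "\<dots> = x" using es_id[OF X x] by (simp add: incl_k_id)
  finally show "sact X m (incl_k m k u) x = x" .
qed

lemma ksupp_transfer:
  assumes X: "em_sset X" and mX: "mild X" and x: "x \<in> simp X m" and a: "em_elem m a" and k: "k \<le> m"
    and B: "infinite (-B)" and sB: "ksupp X m k B x"
  shows "ksupp X m k ((a ! k) ` B) (sact X m a x)"
  unfolding ksupp_def
proof (intro allI impI, elim conjE)
  fix u :: "nat \<Rightarrow> nat" assume u: "inj u" and fx: "\<forall>b\<in>(a ! k) ` B. u b = b"
  obtain M where M: "\<forall>k\<le>m. infinite (-M k) \<and> ksupp X m k (M k) x" using mild_supps[OF mX x] by blast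
  define a' where "a' = map2 (\<circ>) (incl_k m k u) a"
  have la: "length a = Suc m" using a em_elem_def by blast
  have a'n: "a' ! j = (if j = k then u \<circ> a ! j else a ! j)" if "j \<le> m" for j
    using that la by (simp add: a'_def incl_k_nth less_Suc_eq_le)
  have a'e: "em_elem m a'"
  proof -
    have "length a' = Suc m" using la by (simp add: a'_def)
    moreover have "\<forall>f\<in>set a'. inj f"
    proof
      fix f assume "f \<in> set a'"
      then obtain j where j: "j < length a'" "f = a' ! j" by (metis in_set_conv_nth)
      then have j': "j \<le> m" using la by (simp add: a'_def)
      show "inj f" using j a'n[OF j'] em_elem_nth[OF a j'] u by (cases "j = k") (simp_all add: inj_compose)
    qed
    ultimately show ?thesis unfolding em_elem_def by blast
  qed
  have "sact X m (incl_k m k u) (sact X m a x) = sact X m a' x"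
    unfolding a'_def by (rule es_comp[OF X incl_k_em[OF u] a x])
  also have "\<dots> = sact X m a x"
  proof (rule act_agree[OF X x a'e a, where S="\<lambda>j. if j = k then B else M j"])
    show "\<forall>j\<le>m. infinite (- (if j = k then B else M j)) \<and> ksupp X m j (if j = k then B else M j) x \<and>
        (\<forall>s\<in>(if j = k then B else M j). (a' ! j) s = (a ! j) s)"
      using M B sB fx a'n by simp
  qed
  finally show "sact X m (incl_k m k u) (sact X m a x) = sact X m a x" .
qed


lemma Phi_pair: "Phi Xs m (f, x) = map (\<lambda>j. sact (Xs ! j) m (map (\<lambda>k. f ! k ! j) [0..<Suc m]) (x ! j)) [0..<length Xs]"
  unfolding Phi_def by simp

lemma qcar_supps:
  assumes EM: "\<forall>X\<in>set Xs. em_sset X \<and> mild X" and p: "(f, x) \<in> qcar Xs m"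
  obtains B where "\<forall>k\<le>m. \<forall>i<length Xs. infinite (-B k i) \<and> ksupp (Xs ! i) m k (B k i) (x ! i)"
proof -
  note cc = p[unfolded qcar_iff]
  have "\<forall>ki. \<exists>A. fst ki \<le> m \<and> snd ki < length Xs \<longrightarrow> infinite (-A) \<and> ksupp (Xs ! snd ki) m (fst ki) A (x ! snd ki)"
  proof
    fix ki :: "nat \<times> nat"
    show "\<exists>A. fst ki \<le> m \<and> snd ki < length Xs \<longrightarrow> infinite (-A) \<and> ksupp (Xs ! snd ki) m (fst ki) A (x ! snd ki)"
    proof (cases "fst ki \<le> m \<and> snd ki < length Xs")
      case True
      then have "mild (Xs ! snd ki)" "x ! snd ki \<in> simp (Xs ! snd ki) m" using EM cc by auto
      then obtain A where "infinite (-A) \<and> ksupp (Xs ! snd ki) m (fst ki) A (x ! snd ki)"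
        using True unfolding mild_def by blast
      then show ?thesis by blast
    next
      case False then show ?thesis by blast
    qed
  qed
  from choice[OF this] obtain F where F: "\<forall>ki. fst ki \<le> m \<and> snd ki < length Xs \<longrightarrow> infinite (-F ki) \<and> ksupp (Xs ! snd ki) m (fst ki) (F ki) (x ! snd ki)"
    by blast
  show ?thesis
  proof (rule that[of "\<lambda>k i. F (k, i)"], intro allI impI)
    fix k i assume "k \<le> m" "i < length Xs"
    then show "infinite (- F (k, i)) \<and> ksupp (Xs ! i) m k (F (k, i)) (x ! i)" using F[rule_format, of "(k, i)"] by simp
  qed
qed

lemma image_supps:
  assumes EM: "\<forall>X\<in>set Xs. em_sset X \<and> mild X" and p: "(f, x) \<in> qcar Xs m"
    and B: "\<forall>k\<le>m. \<forall>i<length Xs. infinite (-B k i) \<and> ksupp (Xs ! i) m k (B k i) (x ! i)"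
    and k: "k \<le> m"
  shows "\<forall>i<length Xs. infinite (-((f ! k ! i) ` B k i)) \<and> ksupp (Xs ! i) m k ((f ! k ! i) ` B k i) (Phi Xs m (f, x) ! i)"
    and "\<forall>i<length Xs. \<forall>j<length Xs. i \<noteq> j \<longrightarrow> (f ! k ! i) ` B k i \<inter> (f ! k ! j) ` B k j = {}"
    and "infinite (-(\<Union>i<length Xs. (f ! k ! i) ` B k i))"
proof -
  note cc = p[unfolded qcar_iff]
  have fe: "einj (length Xs) (f ! k)" using cc k by blast
  have out: "(f ! k ! j) ` (-B k j) \<subseteq> -(\<Union>i<length Xs. (f ! k ! i) ` B k i)" if j: "j < length Xs" for j
  proof
    fix z assume "z \<in> (f ! k ! j) ` (-B k j)"
    then obtain c where c: "c \<notin> B k j" "z = (f ! k ! j) c" by blast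
    show "z \<in> -(\<Union>i<length Xs. (f ! k ! i) ` B k i)"
    proof
      assume "z \<in> (\<Union>i<length Xs. (f ! k ! i) ` B k i)"
      then obtain i b where ib: "i < length Xs" "b \<in> B k i" "z = (f ! k ! i) b" by blast
      then have "j = i \<and> c = b" using einj_D[OF fe j ib(1)] c by simp
      then show False using c ib by simp
    qed
  qed
  have infj: "infinite ((f ! k ! j) ` (-B k j))" if j: "j < length Xs" for j
    using einj_inj[OF fe j] B k j by (simp add: finite_image_iff inj_on_subset)
  show "\<forall>i<length Xs. infinite (-((f ! k ! i) ` B k i)) \<and> ksupp (Xs ! i) m k ((f ! k ! i) ` B k i) (Phi Xs m (f, x) ! i)"
  proof (intro allI impI conjI)
    fix i assume i: "i < length Xs"
    have "(f ! k ! i) ` (-B k i) \<subseteq> -((f ! k ! i) ` B k i)" using out[OF i] i by blast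
    then show "infinite (-((f ! k ! i) ` B k i))" using infj[OF i] finite_subset by blast
    have X: "em_sset (Xs ! i)" "mild (Xs ! i)" using EM i by auto
    have ae: "em_elem m (map (\<lambda>k. f ! k ! i) [0..<Suc m])" unfolding em_elem_map using cc i einj_inj by blast
    have "ksupp (Xs ! i) m k ((map (\<lambda>k. f ! k ! i) [0..<Suc m] ! k) ` B k i) (sact (Xs ! i) m (map (\<lambda>k. f ! k ! i) [0..<Suc m]) (x ! i))"
      using ksupp_transfer[OF X(1) X(2) _ ae k] cc B k i by blast
    then show "ksupp (Xs ! i) m k ((f ! k ! i) ` B k i) (Phi Xs m (f, x) ! i)"
      using k i by (simp add: Phi_nth less_Suc_eq_le del: upt_Suc)
  qed
  show "\<forall>i<length Xs. \<forall>j<length Xs. i \<noteq> j \<longrightarrow> (f ! k ! i) ` B k i \<inter> (f ! k ! j) ` B k j = {}"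
  proof (intro allI impI)
    fix i j assume i: "i < length Xs" and j: "j < length Xs" and ne: "i \<noteq> j"
    show "(f ! k ! i) ` B k i \<inter> (f ! k ! j) ` B k j = {}"
    proof (rule equals0I)
      fix z assume "z \<in> (f ! k ! i) ` B k i \<inter> (f ! k ! j) ` B k j"
      then obtain b c where "z = (f ! k ! i) b" "z = (f ! k ! j) c" by blast
      then have "i = j" using einj_D[OF fe i j, of b c] by simp
      then show False using ne by simp
    qed
  qed
  show "infinite (-(\<Union>i<length Xs. (f ! k ! i) ` B k i))"
  proof (cases "length Xs = 0")
    case True then show ?thesis by simp
  next
    case False
    then have "0 < length Xs" by simp
    then have "(f ! k ! 0) ` (-B k 0) \<subseteq> -(\<Union>i<length Xs. (f ! k ! i) ` B k i)" "infinite ((f ! k ! 0) ` (-B k 0))"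
      using out infj by blast+
    then show ?thesis using finite_subset by blast
  qed
qed

lemma Phi_in_box:
  assumes EM: "\<forall>X\<in>set Xs. em_sset X \<and> mild X" and p: "(f, x) \<in> qcar Xs m"
  shows "Phi Xs m (f, x) \<in> box Xs m"
proof -
  note cc = p[unfolded qcar_iff]
  obtain B where B: "\<forall>k\<le>m. \<forall>i<length Xs. infinite (-B k i) \<and> ksupp (Xs ! i) m k (B k i) (x ! i)"
    using qcar_supps[OF EM p] by blast
  have simp_i: "Phi Xs m (f, x) ! i \<in> simp (Xs ! i) m" if i: "i < length Xs" for i
  proof -
    have ae: "em_elem m (map (\<lambda>k. f ! k ! i) [0..<Suc m])" unfolding em_elem_map using cc i einj_inj by blast
    show ?thesis using es_closed[OF _ ae, of "Xs ! i" "x ! i"] EM cc i by (simp add: Phi_nth)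
  qed
  show ?thesis unfolding box_def
  proof (intro CollectI conjI allI impI)
    show "length (Phi Xs m (f, x)) = length Xs" by simp
    show "\<And>i. i < length Xs \<Longrightarrow> Phi Xs m (f, x) ! i \<in> simp (Xs ! i) m" by (rule simp_i)
    fix k assume k: "k \<le> m"
    note I = image_supps[OF EM p B k]
    show "\<exists>A. (\<forall>i<length Xs. \<forall>j<length Xs. i \<noteq> j \<longrightarrow> A i \<inter> A j = {}) \<and> infinite (- (\<Union>i<length Xs. A i)) \<and>
      (\<forall>i<length Xs. ksupp (Xs ! i) m k (A i) (Phi Xs m (f, x) ! i))"
    proof (rule exI[of _ "\<lambda>i. (f ! k ! i) ` B k i"], intro conjI)
      show "\<forall>i<length Xs. \<forall>j<length Xs. i \<noteq> j \<longrightarrow> (f ! k ! i) ` B k i \<inter> (f ! k ! j) ` B k j = {}" by (rule I(2))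
      show "infinite (- (\<Union>i<length Xs. (f ! k ! i) ` B k i))" by (rule I(3))
      show "\<forall>i<length Xs. ksupp (Xs ! i) m k ((f ! k ! i) ` B k i) (Phi Xs m (f, x) ! i)" using I(1) by blast
    qed
  qed
qed

lemma box_in_image:
  assumes EM: "\<forall>X\<in>set Xs. em_sset X \<and> mild X" and y: "y \<in> box Xs m"
  shows "y \<in> Phi Xs m ` qcar Xs m"
proof -
  let ?n = "length Xs"
  note yb = y[unfolded box_def mem_Collect_eq]
  have "\<forall>k. \<exists>A. k \<le> m \<longrightarrow> (\<forall>i<?n. \<forall>j<?n. i \<noteq> j \<longrightarrow> A i \<inter> A j = {}) \<and> infinite (- (\<Union>i<?n. A i)) \<and>
        (\<forall>i<?n. ksupp (Xs ! i) m k (A i) (y ! i))"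
  proof
    fix k show "\<exists>A. k \<le> m \<longrightarrow> (\<forall>i<?n. \<forall>j<?n. i \<noteq> j \<longrightarrow> A i \<inter> A j = {}) \<and> infinite (- (\<Union>i<?n. A i)) \<and>
        (\<forall>i<?n. ksupp (Xs ! i) m k (A i) (y ! i))"
    proof (cases "k \<le> m")
      case True
      then obtain A where "(\<forall>i<?n. \<forall>j<?n. i \<noteq> j \<longrightarrow> A i \<inter> A j = {}) \<and> infinite (- (\<Union>i<?n. A i)) \<and>
        (\<forall>i<?n. ksupp (Xs ! i) m k (A i) (y ! i))" using yb by blast
      then show ?thesis by blast
    qed simp
  qed
  from choice[OF this] obtain A where A: "\<forall>k. k \<le> m \<longrightarrow> (\<forall>i<?n. \<forall>j<?n. i \<noteq> j \<longrightarrow> A k i \<inter> A k j = {}) \<and> infinite (- (\<Union>i<?n. A k i)) \<and>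
        (\<forall>i<?n. ksupp (Xs ! i) m k (A k i) (y ! i))" by blast
  define e where "e = map (\<lambda>k. idpatch ?n (A k)) [0..<Suc m]"
  have ce: "(e, y) \<in> qcar Xs m" unfolding qcar_iff
  proof (intro conjI allI impI)
    show "length e = Suc m" by (simp add: e_def)
    fix k assume k: "k \<le> m"
    then show "einj ?n (e ! k)" using A idpatch_einj by (simp add: e_def less_Suc_eq_le del: upt_Suc)
  qed (use yb in auto)
  have "Phi Xs m (e, y) = y"
  proof (rule nth_equalityI)
    show "length (Phi Xs m (e, y)) = length y" using yb by simp
    fix i assume "i < length (Phi Xs m (e, y))"
    then have i: "i < ?n" by simp
    have X: "em_sset (Xs ! i)" using EM i by simp
    have ae: "em_elem m (map (\<lambda>k. e ! k ! i) [0..<Suc m])" unfolding em_elem_map using ce[unfolded qcar_iff] i einj_inj by blast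
    have "sact (Xs ! i) m (map (\<lambda>k. e ! k ! i) [0..<Suc m]) (y ! i) = y ! i"
    proof (rule act_fix[OF X _ ae, where S="\<lambda>k. A k i"])
      show "y ! i \<in> simp (Xs ! i) m" using yb i by blast
      show "\<forall>k\<le>m. ksupp (Xs ! i) m k (A k i) (y ! i) \<and> (\<forall>s\<in>A k i. (map (\<lambda>k. e ! k ! i) [0..<Suc m] ! k) s = s)"
        using A i by (simp add: e_def idpatch_nth less_Suc_eq_le del: upt_Suc)
    qed
    then show "Phi Xs m (e, y) ! i = y ! i" using i by (simp add: Phi_nth)
  qed
  then show ?thesis using ce by (metis image_eqI)
qed


lemma normal_form:
  assumes EM: "\<forall>X\<in>set Xs. em_sset X \<and> mild X" and p: "(f, x) \<in> qcar Xs m"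
  shows "\<exists>D e. (\<forall>k\<le>m. \<forall>i<length Xs. infinite (-D k i) \<and> ksupp (Xs ! i) m k (D k i) (Phi Xs m (f, x) ! i) \<and>
      (\<forall>s\<in>D k i. (e ! k ! i) s = s)) \<and> (e, Phi Xs m (f, x)) \<in> qcar Xs m \<and> qrel Xs m (f, x) (e, Phi Xs m (f, x))"
proof -
  let ?n = "length Xs"
  let ?y = "Phi Xs m (f, x)"
  note cc = p[unfolded qcar_iff]
  have ES: "\<forall>X\<in>set Xs. em_sset X" using EM by blast
  obtain B where B: "\<forall>k\<le>m. \<forall>i<?n. infinite (-B k i) \<and> ksupp (Xs ! i) m k (B k i) (x ! i)"
    using qcar_supps[OF EM p] by blast
  define D where "D k i = (f ! k ! i) ` B k i" for k i
  note I = image_supps[OF EM p B, folded D_def]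
  define e where "e = map (\<lambda>k. idpatch ?n (D k)) [0..<Suc m]"
  have ek: "e ! k = idpatch ?n (D k)" if "k \<le> m" for k
    using that by (simp add: e_def less_Suc_eq_le del: upt_Suc)
  have eeinj: "einj ?n (e ! k)" if k: "k \<le> m" for k
    unfolding ek[OF k] by (rule idpatch_einj) (use I(2)[OF k] I(3)[OF k] in auto)
  have eid: "(e ! k ! i) s = s" if "k \<le> m" "i < ?n" "s \<in> D k i" for k i s
    using that by (simp add: ek idpatch_nth)
  have yl: "length ?y = ?n" by simp
  have ysimp: "\<forall>i<?n. ?y ! i \<in> simp (Xs ! i) m"
  proof (intro allI impI)
    fix i assume i: "i < ?n"
    have ae: "em_elem m (map (\<lambda>k. f ! k ! i) [0..<Suc m])" unfolding em_elem_map using cc i einj_inj by blast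
    show "?y ! i \<in> simp (Xs ! i) m" using es_closed[OF _ ae, of "Xs ! i" "x ! i"] EM cc i by (simp add: Phi_nth)
  qed
  have ce: "(e, ?y) \<in> qcar Xs m" unfolding qcar_iff using eeinj ysimp by (simp add: e_def)
  have cex: "(e, x) \<in> qcar Xs m" unfolding qcar_iff using eeinj cc by (simp add: e_def)
  define efc where "efc = map (\<lambda>k. map (\<lambda>j. (e ! k ! j) \<circ> (f ! k ! j)) [0..<?n]) [0..<Suc m]"
  have efck: "efc ! k ! i = (e ! k ! i) \<circ> (f ! k ! i)" if "k \<le> m" "i < ?n" for k i
    using that by (simp add: efc_def less_Suc_eq_le del: upt_Suc)
  have cefc: "(efc, x) \<in> qcar Xs m" unfolding qcar_iff
  proof (intro conjI allI impI)
    show "length efc = Suc m" by (simp add: efc_def)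
    fix k assume k: "k \<le> m"
    show "einj ?n (efc ! k)"
    proof (rule einj_I)
      show "length (efc ! k) = ?n" using k by (simp add: efc_def less_Suc_eq_le del: upt_Suc)
      fix i j s t assume i: "i < ?n" and j: "j < ?n" and e0: "(efc ! k ! i) s = (efc ! k ! j) t"
      then have "(e ! k ! i) ((f ! k ! i) s) = (e ! k ! j) ((f ! k ! j) t)" using efck[OF k] by simp
      then have ij: "i = j \<and> (f ! k ! i) s = (f ! k ! j) t" using einj_D[OF eeinj[OF k] i j] by blast
      then have "s = t" using einj_inj[OF _ i, of "f ! k"] cc k unfolding inj_def by auto
      then show "i = j \<and> s = t" using ij by simp
    qed
  qed (use cc in auto)
  define us where "us = map (\<lambda>i. map (\<lambda>k. f ! k ! i) [0..<Suc m]) [0..<?n]"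
  have g: "qgen Xs m (e, ?y) (efc, x)"
    unfolding qgen_def
  proof (rule exI[of _ e], rule exI[of _ x], rule exI[of _ us], intro conjI)
    show "(e, x) \<in> qcar Xs m" by (rule cex)
    show "length us = ?n" by (simp add: us_def)
    show "\<forall>u\<in>set us. em_elem m u"
    proof
      fix u assume "u \<in> set us"
      then obtain i where i: "i < ?n" and u: "u = map (\<lambda>k. f ! k ! i) [0..<Suc m]" by (auto simp: us_def)
      show "em_elem m u" unfolding u em_elem_map using cc i einj_inj by blast
    qed
    have "map (\<lambda>i. sact (Xs ! i) m (us ! i) (x ! i)) [0..<?n] = ?y"
      unfolding Phi_pair by (rule map_cong[OF refl]) (simp add: us_def)
    then show "(e, ?y) = (e, map (\<lambda>i. sact (Xs ! i) m (us ! i) (x ! i)) [0..<?n])" by simp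
    have "map (\<lambda>k. map (\<lambda>j. e ! k ! j \<circ> us ! j ! k) [0..<?n]) [0..<Suc m] = efc"
      unfolding efc_def by (intro map_cong[OF refl]) (simp add: us_def)
    then show "(efc, x) = (map (\<lambda>k. map (\<lambda>j. e ! k ! j \<circ> us ! j ! k) [0..<?n]) [0..<Suc m], x)" by simp
  qed
  have r: "qrel Xs m (efc, x) (f, x)"
  proof (rule qrel_agree[OF ES cefc p, where S=B])
    show "\<forall>k\<le>m. \<forall>i<?n. infinite (- B k i)" using B by blast
    show "\<forall>k\<le>m. \<forall>i<?n. ksupp (Xs ! i) m k (B k i) (x ! i)" using B by blast
    show "\<forall>k\<le>m. \<forall>i<?n. \<forall>s\<in>B k i. (efc ! k ! i) s = (f ! k ! i) s"
      using efck eid unfolding D_def by simp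
  qed
  have "qrel Xs m (f, x) (e, ?y)"
    using qrel_trans[OF qrel_sym[OF r] qrel_sym[OF qgen_qrel[OF g]]] .
  moreover have "\<forall>k\<le>m. \<forall>i<?n. infinite (-D k i) \<and> ksupp (Xs ! i) m k (D k i) (?y ! i) \<and> (\<forall>s\<in>D k i. (e ! k ! i) s = s)"
    using I(1) eid by blast
  ultimately show ?thesis using ce by blast
qed

lemma Phi_inj:
  assumes EM: "\<forall>X\<in>set Xs. em_sset X \<and> mild X" and p: "p \<in> qcar Xs m" and q: "q \<in> qcar Xs m"
    and eq: "Phi Xs m p = Phi Xs m q"
  shows "qrel Xs m p q"
proof -
  let ?n = "length Xs"
  have ES: "\<forall>X\<in>set Xs. em_sset X" using EM by blast
  obtain f x where pe: "p = (f, x)" by fastforce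
  obtain f' x' where qe: "q = (f', x')" by fastforce
  define y where "y = Phi Xs m p"
  obtain D e where De: "\<forall>k\<le>m. \<forall>i<?n. infinite (-D k i) \<and> ksupp (Xs ! i) m k (D k i) (y ! i) \<and> (\<forall>s\<in>D k i. (e ! k ! i) s = s)"
    and ce: "(e, y) \<in> qcar Xs m" and r1: "qrel Xs m p (e, y)"
    using normal_form[OF EM p[unfolded pe]] unfolding y_def pe by blast
  obtain D' e' where De': "\<forall>k\<le>m. \<forall>i<?n. infinite (-D' k i) \<and> ksupp (Xs ! i) m k (D' k i) (y ! i) \<and> (\<forall>s\<in>D' k i. (e' ! k ! i) s = s)"
    and ce': "(e', y) \<in> qcar Xs m" and r2: "qrel Xs m q (e', y)"
    using normal_form[OF EM q[unfolded qe]] unfolding y_def eq qe by blast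
  have ysimp: "y ! i \<in> simp (Xs ! i) m" if "i < ?n" for i using ce[unfolded qcar_iff] that by blast
  have r3: "qrel Xs m (e, y) (e', y)"
  proof (rule qrel_agree[OF ES ce ce', where S="\<lambda>k i. D k i \<inter> D' k i"])
    show "\<forall>k\<le>m. \<forall>i<?n. infinite (- (D k i \<inter> D' k i))"
    proof (intro allI impI)
      fix k i assume "k \<le> m" "i < ?n"
      then have "infinite (-D k i)" using De by blast
      moreover have "-D k i \<subseteq> -(D k i \<inter> D' k i)" by blast
      ultimately show "infinite (- (D k i \<inter> D' k i))" using finite_subset by blast
    qed
    show "\<forall>k\<le>m. \<forall>i<?n. ksupp (Xs ! i) m k (D k i \<inter> D' k i) (y ! i)"
    proof (intro allI impI)
      fix k i assume k: "k \<le> m" and i: "i < ?n"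
      have X: "em_sset (Xs ! i)" "mild (Xs ! i)" using EM i by auto
      show "ksupp (Xs ! i) m k (D k i \<inter> D' k i) (y ! i)"
        using ksupp_Int[OF X(1) X(2) ysimp[OF i] k] De De' k i by blast
    qed
    show "\<forall>k\<le>m. \<forall>i<?n. \<forall>s\<in>D k i \<inter> D' k i. (e ! k ! i) s = (e' ! k ! i) s"
      using De De' by simp
  qed
  show ?thesis using qrel_trans[OF qrel_trans[OF r1 r3] qrel_sym[OF r2]] .
qed

theorem theorem2p25:
  fixes Xs :: "'a emsset list"
  assumes "\<forall>X\<in>set Xs. em_sset X \<and> mild X"
  shows
    "(\<forall>m p q. p \<in> qcar Xs m \<and> q \<in> qcar Xs m \<and> qrel Xs m p q \<longrightarrow> Phi Xs m p = Phi Xs m q)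
   \<and> (\<forall>m \<alpha> p. simp_op m \<alpha> \<and> p \<in> qcar Xs m \<longrightarrow>
         Phi Xs (length \<alpha> - 1) (qsmap Xs m \<alpha> p) = map (\<lambda>j. smap (Xs ! j) m \<alpha> (Phi Xs m p ! j)) [0..<length Xs])
   \<and> (\<forall>m v p. em_elem m v \<and> p \<in> qcar Xs m \<longrightarrow>
         Phi Xs m (qact m v p) = map (\<lambda>j. sact (Xs ! j) m v (Phi Xs m p ! j)) [0..<length Xs])
   \<and> (\<forall>m. Phi Xs m ` qcar Xs m = box Xs m)
   \<and> (\<forall>m. \<forall>p\<in>qcar Xs m. \<forall>q\<in>qcar Xs m. Phi Xs m p = Phi Xs m q \<longrightarrow> qrel Xs m p q)"
proof (intro conjI allI impI ballI)
  have ES: "\<forall>X\<in>set Xs. em_sset X" using assms by blast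
  show "\<And>m p q. p \<in> qcar Xs m \<and> q \<in> qcar Xs m \<and> qrel Xs m p q \<Longrightarrow> Phi Xs m p = Phi Xs m q"
    using qrel_Phi[OF ES] by blast
  show "\<And>m \<alpha> p. simp_op m \<alpha> \<and> p \<in> qcar Xs m \<Longrightarrow>
         Phi Xs (length \<alpha> - 1) (qsmap Xs m \<alpha> p) = map (\<lambda>j. smap (Xs ! j) m \<alpha> (Phi Xs m p ! j)) [0..<length Xs]"
    using Phi_smap[OF ES] by blast
  show "\<And>m v p. em_elem m v \<and> p \<in> qcar Xs m \<Longrightarrow>
         Phi Xs m (qact m v p) = map (\<lambda>j. sact (Xs ! j) m v (Phi Xs m p ! j)) [0..<length Xs]"
    using Phi_qact[OF ES] by blast
  show "\<And>m. Phi Xs m ` qcar Xs m = box Xs m"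
  proof
    fix m
    show "Phi Xs m ` qcar Xs m \<subseteq> box Xs m"
    proof
      fix y assume "y \<in> Phi Xs m ` qcar Xs m"
      then obtain f x where "(f, x) \<in> qcar Xs m" "y = Phi Xs m (f, x)" by auto
      then show "y \<in> box Xs m" using Phi_in_box[OF assms] by blast
    qed
    show "box Xs m \<subseteq> Phi Xs m ` qcar Xs m" using box_in_image[OF assms] by blast
  qed
  show "\<And>m p q. p \<in> qcar Xs m \<Longrightarrow> q \<in> qcar Xs m \<Longrightarrow> Phi Xs m p = Phi Xs m q \<Longrightarrow> qrel Xs m p q"
    using Phi_inj[OF assms] by blast
qed

end
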